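(* Let $M$ be a $\mathfrak D$-module (not necessarily a weight module) on which the subalgebra $\mathfrak D^+$ acts locally finitely. Then: (i) $M$ contains a nonzero vector $v$ such that $\mathfrak D^+v\subseteq\mathbb Cv$; (ii) if $M$ is simple, then $M$ is a Whittaker module or a highest weight module.
   Context: $\mathfrak D$ is the Lie algebra with basis $\{d_m,h_r,\mathbf c_1,\mathbf c_2:m\in\mathbb Z,r\in\frac12+\mathbb Z\}$ and brackets $[d_m,d_n]=(m-n)d_{m+n}+\delta_{m+n,0}\frac{m^3-m}{12}\mathbf c_1$, $[d_m,h_r]=-rh_{m+r}$, $[h_r,h_s]=r\delta_{r+s,0}\mathbf c_2$, with $\mathbf c_1,\mathbf c_2$ central. $\mathfrak D^{\pm}=\bigoplus_{n\ge1}\mathbb Cd_{\pm n}\oplus\bigoplus_{r\in\frac12+\mathbb N}\mathbb Ch_{\pm r}$, $\mathfrak D^0=\mathbb Cd_0\oplus\mathbb C\mathbf c_1\oplus\mathbb C\mathbf c_2$. $\mathfrak D^+$ acts locally finitely on $M$ if every vector lies in a finite-dimensional $\mathfrak D^+$-submodule. A Whittaker module is a module generated by a nonzero vector $v$ with $xv=\varphi(x)v$ ($x\in\mathfrak D^+$) for some Lie algebra homomorphism $\varphi:\mathfrak D^+\to\mathbb C$; a highest weight module is a module generated by a nonzero vector $v$ with $\mathfrak D^+v=0$ and $\mathfrak D^0v\subseteq\mathbb Cv$. *)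

theory Defs
  imports Complex_Main
begin

text \<open>A module over the Lie algebra D is a complex vector space (type 'v with the
scalar multiplication scl) together with linear operators representing the basis
elements: d m = d_m, h k = h_{k+1/2} (so k ranges over all integers and
r = k + 1/2 over 1/2 + Z), c1, c2, satisfying the bracket relations.\<close>

definition D_module ::
  "(complex \<Rightarrow> 'v::ab_group_add \<Rightarrow> 'v) \<Rightarrow> (int \<Rightarrow> 'v \<Rightarrow> 'v) \<Rightarrow> (int \<Rightarrow> 'v \<Rightarrow> 'v)
     \<Rightarrow> ('v \<Rightarrow> 'v) \<Rightarrow> ('v \<Rightarrow> 'v) \<Rightarrow> bool" where
  "D_module scl d h c1 c2 \<longleftrightarrow>
     vector_space scl \<and>
     (\<forall>m. Vector_Spaces.linear scl scl (d m)) \<and> (\<forall>k. Vector_Spaces.linear scl scl (h k)) \<and>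
     Vector_Spaces.linear scl scl c1 \<and> Vector_Spaces.linear scl scl c2 \<and>
     (\<forall>m n x. d m (d n x) - d n (d m x) =
        scl (of_int (m - n)) (d (m + n) x) +
        (if m + n = 0 then scl (of_int (m^3 - m) / 12) (c1 x) else 0)) \<and>
     (\<forall>m k x. d m (h k x) - h k (d m x) = scl (- (of_int k + 1/2)) (h (m + k) x)) \<and>
     (\<forall>k l x. h k (h l x) - h l (h k x) =
        (if k + l + 1 = 0 then scl (of_int k + 1/2) (c2 x) else 0)) \<and>
     (\<forall>m x. c1 (d m x) = d m (c1 x) \<and> c2 (d m x) = d m (c2 x)) \<and>
     (\<forall>k x. c1 (h k x) = h k (c1 x) \<and> c2 (h k x) = h k (c2 x)) \<and>
     (\<forall>x. c1 (c2 x) = c2 (c1 x))"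

definition D_submodule ::
  "(complex \<Rightarrow> 'v::ab_group_add \<Rightarrow> 'v) \<Rightarrow> (int \<Rightarrow> 'v \<Rightarrow> 'v) \<Rightarrow> (int \<Rightarrow> 'v \<Rightarrow> 'v)
     \<Rightarrow> ('v \<Rightarrow> 'v) \<Rightarrow> ('v \<Rightarrow> 'v) \<Rightarrow> 'v set \<Rightarrow> bool" where
  "D_submodule scl d h c1 c2 W \<longleftrightarrow>
     module.subspace scl W \<and>
     (\<forall>m. \<forall>x\<in>W. d m x \<in> W) \<and> (\<forall>k. \<forall>x\<in>W. h k x \<in> W) \<and>
     (\<forall>x\<in>W. c1 x \<in> W) \<and> (\<forall>x\<in>W. c2 x \<in> W)"

definition D_simple ::
  "(complex \<Rightarrow> 'v::ab_group_add \<Rightarrow> 'v) \<Rightarrow> (int \<Rightarrow> 'v \<Rightarrow> 'v) \<Rightarrow> (int \<Rightarrow> 'v \<Rightarrow> 'v)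
     \<Rightarrow> ('v \<Rightarrow> 'v) \<Rightarrow> ('v \<Rightarrow> 'v) \<Rightarrow> bool" where
  "D_simple scl d h c1 c2 \<longleftrightarrow> (\<exists>x::'v. x \<noteq> 0) \<and>
     (\<forall>W. D_submodule scl d h c1 c2 W \<longrightarrow> W = {0} \<or> W = UNIV)"

text \<open>D^+ is spanned by d_n (n \<ge> 1) and h_{k+1/2} (k \<ge> 0).
D^+ acts locally finitely: every vector lies in a finite-dimensional D^+-submodule.\<close>
definition Dplus_locally_finite where
  "Dplus_locally_finite scl d h \<longleftrightarrow>
     (\<forall>v::'v::ab_group_add. \<exists>W. module.subspace scl W \<and> v \<in> W \<and>
        (\<exists>B. finite B \<and> W = module.span scl B) \<and>
        (\<forall>n\<ge>1. \<forall>x\<in>W. d n x \<in> W) \<and> (\<forall>k\<ge>0. \<forall>x\<in>W. h k x \<in> W))"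

definition D_generated_by where
  "D_generated_by scl d h c1 c2 (v::'v::ab_group_add) \<longleftrightarrow>
     (\<forall>W. D_submodule scl d h c1 c2 W \<and> v \<in> W \<longrightarrow> W = UNIV)"

text \<open>A linear map phi : D^+ \<rightarrow> C, given on the basis by phid n = phi(d_n) (n \<ge> 1)
and phih k = phi(h_{k+1/2}) (k \<ge> 0), is a Lie algebra homomorphism iff it kills
all brackets of basis elements of D^+ (C being abelian).\<close>
definition Dplus_lie_hom :: "(int \<Rightarrow> complex) \<Rightarrow> (int \<Rightarrow> complex) \<Rightarrow> bool" where
  "Dplus_lie_hom phid phih \<longleftrightarrow>
     (\<forall>m\<ge>1. \<forall>n\<ge>1. of_int (m - n) * phid (m + n) = 0) \<and>
     (\<forall>m\<ge>1. \<forall>k\<ge>0. - (of_int k + 1/2) * phih (m + k) = 0)"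

definition Whittaker_module where
  "Whittaker_module scl d h c1 c2 \<longleftrightarrow>
     (\<exists>v::'v::ab_group_add. v \<noteq> 0 \<and> D_generated_by scl d h c1 c2 v \<and>
        (\<exists>phid phih. Dplus_lie_hom phid phih \<and>
           (\<forall>n\<ge>1. d n v = scl (phid n) v) \<and> (\<forall>k\<ge>0. h k v = scl (phih k) v)))"

definition highest_weight_module where
  "highest_weight_module scl d h c1 c2 \<longleftrightarrow>
     (\<exists>v::'v::ab_group_add. v \<noteq> 0 \<and> D_generated_by scl d h c1 c2 v \<and>
        (\<forall>n\<ge>1. d n v = 0) \<and> (\<forall>k\<ge>0. h k v = 0) \<and>
        (\<exists>a. d 0 v = scl a v) \<and> (\<exists>a. c1 v = scl a v) \<and> (\<exists>a. c2 v = scl a v))"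

end

theory Submission
  imports Defs "HOL-Library.Function_Algebras" "HOL-Computational_Algebra.Fundamental_Theorem_Algebra"
begin

context vector_space
begin

lemma dep_family:
  fixes f :: "nat \<Rightarrow> 'b" and n :: nat
  assumes fB: "finite B" and sp: "\<forall>i\<le>n. f i \<in> span B" and cn: "card B \<le> n"
  shows "\<exists>a. (\<exists>i\<le>n. a i \<noteq> 0) \<and> (\<Sum>i\<le>n. scale (a i) (f i)) = 0"
proof (cases "inj_on f {..n}")
  case True
  have "\<not> independent (f ` {..n})"
  proof
    assume ind: "independent (f ` {..n})"
    have "f ` {..n} \<subseteq> span B" using sp by auto
    from independent_span_bound[OF fB ind this] have "card (f ` {..n}) \<le> card B" by simp
    moreover have "card (f ` {..n}) = Suc n" using True by (simp add: card_image)
    ultimately show False using cn by simp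
  qed
  then obtain t u v where t: "finite t" "t \<subseteq> f ` {..n}" "(\<Sum>v\<in>t. scale (u v) v) = 0"
    "v \<in> t" "u v \<noteq> 0"
    unfolding dependent_explicit by blast
  define a where "a i = (if f i \<in> t then u (f i) else 0)" for i
  have "(\<Sum>i\<le>n. scale (a i) (f i)) = (\<Sum>x\<in>f ` {..n}. scale (if x \<in> t then u x else 0) x)"
    by (simp add: sum.reindex True a_def)
  also have "\<dots> = (\<Sum>x\<in>f ` {..n}. if x \<in> t then scale (u x) x else 0)"
    by (rule sum.cong) auto
  also have "\<dots> = (\<Sum>x\<in>f ` {..n} \<inter> t. scale (u x) x)"
    by (simp add: sum.inter_restrict)
  also have "f ` {..n} \<inter> t = t" using t by auto
  finally have s0: "(\<Sum>i\<le>n. scale (a i) (f i)) = 0" using t by simp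
  from t obtain j where j: "j \<le> n" "v = f j" by auto
  have "a j \<noteq> 0" using t j by (simp add: a_def)
  with s0 j show ?thesis by blast
next
  case False
  then obtain i j where ij: "i \<le> n" "j \<le> n" "i \<noteq> j" "f i = f j"
    unfolding inj_on_def by auto
  define a where "a k = (if k = i then 1 else if k = j then -1 else (0::'a))" for k
  have "scale (a k) (f k) = (if k = i then f i else 0) - (if k = j then f j else 0)" for k
    using ij by (auto simp: a_def)
  then have "(\<Sum>k\<le>n. scale (a k) (f k)) = (\<Sum>k\<le>n. (if k = i then f i else 0)) - (\<Sum>k\<le>n. (if k = j then f j else 0))"
    by (simp add: sum_subtractf)
  also have "\<dots> = 0" using ij by simp
  finally show ?thesis using ij by (intro exI[of _ a]) (auto simp: a_def)
qed

lemma trim_rel: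
  fixes f :: "nat \<Rightarrow> 'b" and n :: nat
  assumes "\<exists>i\<le>n. a i \<noteq> 0" "(\<Sum>i\<le>n. scale (a i) (f i)) = 0"
  shows "\<exists>m\<le>n. a m \<noteq> 0 \<and> (\<Sum>i\<le>m. scale (a i) (f i)) = 0"
proof -
  define S where "S = {i. i \<le> n \<and> a i \<noteq> 0}"
  have "S \<subseteq> {..n}" by (auto simp: S_def)
  then have fS: "finite S" "S \<noteq> {}" using assms(1) finite_subset by (auto simp: S_def)
  define m where "m = Max S"
  have mS: "m \<in> S" using fS Max_in m_def by blast
  have ge: "i \<in> S \<Longrightarrow> i \<le> m" for i using fS m_def Max_ge by blast
  have "(\<Sum>i\<le>m. scale (a i) (f i)) = (\<Sum>i\<le>n. scale (a i) (f i))"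
  proof (rule sum.mono_neutral_left)
    show "{..m} \<subseteq> {..n}" using mS by (auto simp: S_def)
    show "\<forall>i\<in>{..n} - {..m}. scale (a i) (f i) = 0"
      using ge by (force simp: S_def)
  qed simp
  then show ?thesis using mS assms(2) by (auto simp: S_def)
qed

lemma rel_exists:
  fixes f :: "nat \<Rightarrow> 'b"
  assumes "finite B" "\<forall>i. f i \<in> span B"
  shows "\<exists>m a. a m \<noteq> 0 \<and> (\<Sum>i\<le>m. scale (a i) (f i)) = 0"
  using dep_family[OF assms(1), of "card B" f] assms(2) trim_rel by blast

lemma least_rel:
  fixes f :: "nat \<Rightarrow> 'b"
  assumes "\<exists>m a. a m \<noteq> 0 \<and> (\<Sum>i\<le>m. scale (a i) (f i)) = 0"
  shows "\<exists>m a. a m \<noteq> 0 \<and> (\<Sum>i\<le>m. scale (a i) (f i)) = 0 \<and>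
     (\<forall>k<m. \<forall>b. b k \<noteq> 0 \<longrightarrow> (\<Sum>i\<le>k. scale (b i) (f i)) \<noteq> 0)"
proof -
  define P where "P m \<longleftrightarrow> (\<exists>a. a m \<noteq> 0 \<and> (\<Sum>i\<le>m. scale (a i) (f i)) = 0)" for m
  have ex: "\<exists>m. P m" using assms by (simp add: P_def)
  have "P (LEAST m. P m)" by (rule LeastI_ex[OF ex])
  then obtain a where a: "a (LEAST m. P m) \<noteq> 0" "(\<Sum>i\<le>(LEAST m. P m). scale (a i) (f i)) = 0"
    unfolding P_def by blast
  have "\<forall>k<(LEAST m. P m). \<not> P k" using not_less_Least by blast
  with a show ?thesis unfolding P_def by blast
qed

end

locale cvs = vector_space scl for scl :: "complex \<Rightarrow> 'v::ab_group_add \<Rightarrow> 'v"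
begin

definition lin :: "('v \<Rightarrow> 'v) \<Rightarrow> bool" where
  "lin T \<longleftrightarrow> (\<forall>x y. T (x + y) = T x + T y) \<and> (\<forall>c x. T (scl c x) = scl c (T x))"

lemma lin_add: "lin T \<Longrightarrow> T (x + y) = T x + T y" by (simp add: lin_def)
lemma lin_scl: "lin T \<Longrightarrow> T (scl c x) = scl c (T x)" by (simp add: lin_def)
lemma lin_0: "lin T \<Longrightarrow> T 0 = 0"
  using lin_scl[of T 0 0] by simp
lemma lin_neg: "lin T \<Longrightarrow> T (- x) = - T x"
  using lin_scl[of T "-1" x] by simp
lemma lin_diff: "lin T \<Longrightarrow> T (x - y) = T x - T y"
  using lin_add[of T x "- y"] lin_neg[of T y] by simp
lemma lin_sum: "lin T \<Longrightarrow> T (sum f A) = (\<Sum>x\<in>A. T (f x))"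
  by (induct A rule: infinite_finite_induct) (simp_all add: lin_0 lin_add)
lemma lin_funpow: "lin T \<Longrightarrow> lin (T ^^ n)"
  by (induct n) (simp_all add: lin_def)
lemma lin_shift: "lin T \<Longrightarrow> lin (\<lambda>x. T x - scl \<mu> x)"
  by (simp add: lin_def algebra_simps)
lemma lin_scl_comp: "lin T \<Longrightarrow> lin (\<lambda>x. scl c (T x))"
  by (simp add: lin_def algebra_simps scale_left_commute)

lemma lin_zero_on_span:
  assumes "lin T" "\<forall>x\<in>S. T x = 0" "w \<in> span S"
  shows "T w = 0"
  using assms(3)
proof (induct rule: span_induct_alt)
  case base then show ?case using assms(1) by (simp add: lin_0)
next
  case (step c x y) then show ?case using assms by (simp add: lin_add lin_scl)
qed

lemma eig_subspace:
  assumes "subspace U" "lin T"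
  shows "subspace {x\<in>U. T x = scl e x}"
  using assms unfolding subspace_def
  by (auto simp: lin_add lin_scl lin_0 scale_right_distrib scale_left_commute)

lemma eigen:
  assumes U: "subspace U" "U \<subseteq> span B" "finite B" "u \<in> U" "u \<noteq> 0"
    and T: "lin T" "\<forall>x\<in>U. T x \<in> U"
  shows "\<exists>w\<in>U. w \<noteq> 0 \<and> (\<exists>e. T w = scl e w)"
proof -
  have pw: "(T ^^ i) u \<in> U" for i
    by (induct i) (use U T in auto)
  have "\<exists>m a. a m \<noteq> 0 \<and> (\<Sum>i\<le>m. scl (a i) ((T ^^ i) u)) = 0"
    by (rule rel_exists[OF U(3)]) (use pw U(2) in auto)
  from least_rel[OF this] obtain m a where
    a: "a m \<noteq> 0" "(\<Sum>i\<le>m. scl (a i) ((T ^^ i) u)) = 0"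
    and mini: "\<forall>k<m. \<forall>b. b k \<noteq> 0 \<longrightarrow> (\<Sum>i\<le>k. scl (b i) ((T ^^ i) u)) \<noteq> 0"
    by blast
  have "m \<noteq> 0"
  proof
    assume "m = 0" then show False using a U(5) by simp
  qed
  then obtain m' where m': "m = Suc m'" by (cases m) auto
  define p where "p = (\<Sum>i\<le>m. monom (a i) i)"
  have cp: "coeff p i = (if i \<le> m then a i else 0)" for i
    by (simp add: p_def coeff_sum)
  have dp: "degree p = m"
  proof (rule antisym)
    show "degree p \<le> m" by (rule degree_le) (simp add: cp)
    show "m \<le> degree p" by (rule le_degree) (simp add: cp a)
  qed
  have "\<not> constant (poly p)" using dp m' by (simp add: constant_degree)
  from fundamental_theorem_of_algebra[OF this] obtain r where "poly p r = 0" by blast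
  then have "[:-r, 1:] dvd p" by (simp add: poly_eq_0_iff_dvd)
  then obtain q where pq: "p = [:-r, 1:] * q" by (elim dvdE)
  have p0: "p \<noteq> 0" using dp m' by auto
  then have q0: "q \<noteq> 0" using pq by auto
  have "degree ([:-r, 1:] * q) = degree [:-r, 1:] + degree q" by (rule degree_mult_eq) (use q0 in auto)
  then have dq: "degree q = m'" using pq dp m' by simp
  have pq2: "p = smult (-r) q + pCons 0 q" using pq by simp
  have cpq: "coeff p i = - r * coeff q i + (if i = 0 then 0 else coeff q (i - 1))" for i
    by (simp add: pq2 coeff_pCons')
  define w where "w = (\<Sum>i\<le>m'. scl (coeff q i) ((T ^^ i) u))"
  have w0: "w \<noteq> 0"
  proof
    assume "w = 0"
    moreover have "coeff q m' \<noteq> 0" using dq q0 by (metis leading_coeff_0_iff)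
    ultimately show False using mini m' unfolding w_def by blast
  qed
  have wU: "w \<in> U" unfolding w_def
    by (intro subspace_sum[OF U(1)] subspace_scale[OF U(1)] pw)
  have Tw: "T w = (\<Sum>i\<le>m'. scl (coeff q i) ((T ^^ Suc i) u))"
    unfolding w_def by (simp add: lin_sum[OF T(1)] lin_scl[OF T(1)])
  have "0 = (\<Sum>i\<le>m. scl (coeff p i) ((T ^^ i) u))"
    using a(2) by (simp add: cp)
  also have "\<dots> = (\<Sum>i\<le>m. scl (- r * coeff q i) ((T ^^ i) u)) +
      (\<Sum>i\<le>m. scl (if i = 0 then 0 else coeff q (i - 1)) ((T ^^ i) u))"
    unfolding sum.distrib[symmetric]
    by (rule sum.cong) (simp_all add: cpq scale_left_diff_distrib flip: scale_left_distrib)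
  also have "(\<Sum>i\<le>m. scl (- r * coeff q i) ((T ^^ i) u)) = scl (- r) w"
    using dq by (simp add: m' w_def scale_sum_right coeff_eq_0)
  also have "(\<Sum>i\<le>m. scl (if i = 0 then 0 else coeff q (i - 1)) ((T ^^ i) u)) = T w"
    unfolding m' Tw by (subst sum.atMost_Suc_shift) simp
  finally have "T w = scl r w" by (simp add: algebra_simps)
  with w0 wU show ?thesis by blast
qed


lemma central_comm:
  assumes U: "subspace U" "U \<subseteq> span B" "finite B" "u0 \<in> U" "u0 \<noteq> 0"
    and lin: "lin A" "lin Bo" "lin C"
    and pres: "\<forall>x\<in>U. A x \<in> U" "\<forall>x\<in>U. Bo x \<in> U" "\<forall>x\<in>U. C x \<in> U"
    and comm: "\<forall>x\<in>U. C x = A (Bo x) - Bo (A x)" "\<forall>x\<in>U. C (A x) = A (C x)"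
      "\<forall>x\<in>U. C (Bo x) = Bo (C x)"
  shows "\<exists>w\<in>U. w \<noteq> 0 \<and> C w = 0"
proof -
  obtain w0 e where w0: "w0 \<in> U" "w0 \<noteq> 0" "C w0 = scl e w0"
    using eigen[OF U lin(3) pres(3)] by blast
  show ?thesis
  proof (cases "e = 0")
    case True then show ?thesis using w0 by auto
  next
    case False
    define E where "E = {x\<in>U. C x = scl e x}"
    have Es: "subspace E" unfolding E_def by (rule eig_subspace[OF U(1) lin(3)])
    have EB: "E \<subseteq> span B" using U(2) by (auto simp: E_def)
    have w0E: "w0 \<in> E" using w0 by (simp add: E_def)
    have AE: "\<forall>x\<in>E. A x \<in> E" using pres comm(2) lin(1) by (auto simp: E_def lin_scl)
    have BE: "\<forall>x\<in>E. Bo x \<in> E" using pres comm(3) lin(2) by (auto simp: E_def lin_scl)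
    obtain u mu where u: "u \<in> E" "u \<noteq> 0" "Bo u = scl mu u"
      using eigen[OF Es EB U(3) w0E w0(2) lin(2) BE] by blast
    define Bp where "Bp x = Bo x - scl mu x" for x
    have linBp: "lin Bp" using lin_shift[OF lin(2), of mu] unfolding Bp_def by simp
    have key: "Bp (A x) = A (Bp x) - scl e x" if "x \<in> E" for x
    proof -
      have "scl e x = A (Bo x) - Bo (A x)" using that comm(1) by (auto simp: E_def)
      then show ?thesis unfolding Bp_def using lin(1)
        by (simp add: lin_diff lin_scl algebra_simps)
    qed
    have pwE: "(A ^^ i) u \<in> E" for i
      by (induct i) (use u AE in auto)
    have Bp0: "Bp u = 0" using u by (simp add: Bp_def)
    have rec: "Bp ((A ^^ Suc n) u) = scl (- (of_nat (Suc n) * e)) ((A ^^ n) u)" for n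
    proof (induct n)
      case 0
      show ?case using key[OF u(1)] Bp0 lin_0[OF lin(1)] by simp
    next
      case (Suc n)
      have "Bp ((A ^^ Suc (Suc n)) u) = A (Bp ((A ^^ Suc n) u)) - scl e ((A ^^ Suc n) u)"
        using key[OF pwE[of "Suc n"]] by simp
      also have "\<dots> = scl (- (of_nat (Suc n) * e)) ((A ^^ Suc n) u) - scl e ((A ^^ Suc n) u)"
        using Suc lin_scl[OF lin(1)] by (simp del: scale_minus_left)
      also have "\<dots> = scl (- (of_nat (Suc (Suc n)) * e)) ((A ^^ Suc n) u)"
        by (simp add: scale_left_diff_distrib[symmetric] algebra_simps)
      finally show ?case .
    qed
    have "\<exists>m a. a m \<noteq> 0 \<and> (\<Sum>i\<le>m. scl (a i) ((A ^^ i) u)) = 0"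
      by (rule rel_exists[OF U(3)]) (use pwE EB in auto)
    from least_rel[OF this] obtain m a where
      a: "a m \<noteq> 0" "(\<Sum>i\<le>m. scl (a i) ((A ^^ i) u)) = 0"
      and mini: "\<forall>k<m. \<forall>b. b k \<noteq> 0 \<longrightarrow> (\<Sum>i\<le>k. scl (b i) ((A ^^ i) u)) \<noteq> 0"
      by blast
    have "m \<noteq> 0"
    proof
      assume "m = 0" then show False using a u(2) by simp
    qed
    then obtain m' where m': "m = Suc m'" by (cases m) auto
    have "0 = Bp (\<Sum>i\<le>m. scl (a i) ((A ^^ i) u))" using a(2) lin_0[OF linBp] by simp
    also have "\<dots> = (\<Sum>i\<le>Suc m'. scl (a i) (Bp ((A ^^ i) u)))"
      unfolding m' lin_sum[OF linBp] lin_scl[OF linBp] ..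
    also have "\<dots> = (\<Sum>i\<le>m'. scl (a (Suc i) * (- (of_nat (Suc i) * e))) ((A ^^ i) u))"
      by (subst sum.atMost_Suc_shift) (simp add: Bp0 rec del: funpow.simps)
    finally have z: "(\<Sum>i\<le>m'. scl (a (Suc i) * (- (of_nat (Suc i) * e))) ((A ^^ i) u)) = 0" by simp
    have nz: "(of_nat (Suc m') :: complex) \<noteq> 0" by (rule of_nat_neq_0)
    have "a (Suc m') * (- (of_nat (Suc m') * e)) \<noteq> 0"
      using a(1) m' False nz by simp
    from mini[rule_format, of m' "\<lambda>i. a (Suc i) * (- (of_nat (Suc i) * e))"] this z m'
    show ?thesis by simp
  qed
qed

end

lemma half_ne: "(of_int k + 1/2 :: complex) \<noteq> 0"
proof
  assume "(of_int k + 1/2 :: complex) = 0"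
  then have "(of_int (2*k+1) :: complex) = 0" by (simp add: field_simps)
  then have "2*k+1 = 0" by (simp only: of_int_eq_0_iff)
  then show False by presburger
qed

lemma sum_fun_apply: "(sum f A) x = (\<Sum>a\<in>A. f a x)"
  by (induct A rule: infinite_finite_induct) auto

locale Dm = cvs scl for scl :: "complex \<Rightarrow> 'v::ab_group_add \<Rightarrow> 'v" +
  fixes d h :: "int \<Rightarrow> 'v \<Rightarrow> 'v"
  assumes lin_d: "cvs.lin scl (d m)" and lin_h: "cvs.lin scl (h k)"
  and dd: "m \<ge> 1 \<Longrightarrow> n \<ge> 1 \<Longrightarrow> d m (d n x) - d n (d m x) = scl (of_int (m - n)) (d (m + n) x)"
  and dh: "d m (h k x) - h k (d m x) = scl (- (of_int k + 1/2)) (h (m + k) x)"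
  and hh: "k \<ge> 0 \<Longrightarrow> l \<ge> 0 \<Longrightarrow> h k (h l x) = h l (h k x)"
begin

lemma lin_sum_fam:
  assumes "\<forall>i. lin (T i)"
  shows "lin (\<lambda>w. \<Sum>i\<in>A. scl (a i) (T i w))"
  using assms unfolding lin_def
  by (simp add: scale_right_distrib sum.distrib scale_sum_right mult.commute)

end

locale Dfin = Dm +
  fixes W BW
  assumes W: "W = span BW" "finite BW"
  and inv_d: "n \<ge> 1 \<Longrightarrow> x \<in> W \<Longrightarrow> d n x \<in> W"
  and inv_h: "k \<ge> 0 \<Longrightarrow> x \<in> W \<Longrightarrow> h k x \<in> W"
begin

lemma shiftS:
  assumes R: "\<forall>w\<in>W. (\<Sum>i\<le>L. scl (c i) (d (f i) w)) = 0" and f: "\<forall>i. f i \<ge> 1" and m: "m \<ge> 1"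
  shows "\<forall>w\<in>W. (\<Sum>i\<le>L. scl (c i * of_int (m - f i)) (d (f i + m) w)) = 0"
proof
  fix w assume w: "w \<in> W"
  have dm: "d m w \<in> W" using inv_d[OF m w] .
  have "0 = d m (\<Sum>i\<le>L. scl (c i) (d (f i) w)) - (\<Sum>i\<le>L. scl (c i) (d (f i) (d m w)))"
    using R w dm lin_0[OF lin_d] by simp
  also have "\<dots> = (\<Sum>i\<le>L. scl (c i) (d m (d (f i) w) - d (f i) (d m w)))"
    by (simp add: lin_sum[OF lin_d] lin_scl[OF lin_d] sum_subtractf scale_right_diff_distrib)
  also have "\<dots> = (\<Sum>i\<le>L. scl (c i * of_int (m - f i)) (d (f i + m) w))"
    by (rule sum.cong) (simp_all add: dd[OF m f[rule_format]] add.commute)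
  finally show "(\<Sum>i\<le>L. scl (c i * of_int (m - f i)) (d (f i + m) w)) = 0" by simp
qed

lemma Z1: "\<forall>c s. s \<ge> 1 \<longrightarrow> c L \<noteq> 0 \<longrightarrow> (\<forall>w\<in>W. (\<Sum>i\<le>L. scl (c i) (d (s + int i) w)) = 0)
   \<longrightarrow> (\<exists>N\<ge>1. \<forall>w\<in>W. d N w = 0)"
proof (induct L)
  case 0
  show ?case by auto
next
  case (Suc L)
  show ?case
  proof (intro allI impI)
    fix c :: "nat \<Rightarrow> complex" and s :: int
    assume s: "s \<ge> 1" and cL: "c (Suc L) \<noteq> 0"
      and R: "\<forall>w\<in>W. (\<Sum>i\<le>Suc L. scl (c i) (d (s + int i) w)) = 0"
    have f1: "\<forall>i. s + int i \<ge> 1" using s by simp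
    have f2: "\<forall>i. s + int i + 1 \<ge> 1" using s by simp
    have f3: "\<forall>i. s + int i + 2 \<ge> 1" using s by simp
    note r1 = shiftS[OF R f1, of 4]
    note r2 = shiftS[OF shiftS[OF R f1, of 1] f2, of 3]
    note r3 = shiftS[OF shiftS[OF R f1, of 2] f3, of 2]
    have idx: "s + int i + 1 + 3 = s + int i + 4" "s + int i + 2 + 2 = s + int i + 4" for i by simp_all
    have new: "\<forall>w\<in>W. (\<Sum>i\<le>Suc L. scl (c i * of_nat i) (d (s + int i + 4) w)) = 0"
    proof
      fix w assume w: "w \<in> W"
      define v where "v i = d (s + int i + 4) w" for i
      define x1 where "x1 i = c i * of_int (4 - (s + int i))" for i
      define x2 where "x2 i = c i * of_int (1 - (s + int i)) * of_int (3 - (s + int i + 1))" for i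
      define x3 where "x3 i = c i * of_int (2 - (s + int i)) * of_int (2 - (s + int i + 2))" for i
      have e1: "(\<Sum>i\<le>Suc L. scl (x1 i) (v i)) = 0" using r1 w by (simp add: x1_def v_def)
      have e2: "(\<Sum>i\<le>Suc L. scl (x2 i) (v i)) = 0" using r2 w by (simp add: x2_def v_def idx)
      have e3: "(\<Sum>i\<le>Suc L. scl (x3 i) (v i)) = 0" using r3 w by (simp add: x3_def v_def idx)
      define al :: complex where "al = 1 - of_int s / 2"
      define be :: complex where "be = - (2 - of_int s / 2)"
      define ga :: complex where "ga = 2 - of_int s / 2"
      have coef: "c i * of_nat i = al * x1 i + be * x2 i + ga * x3 i" for i
        unfolding al_def be_def ga_def x1_def x2_def x3_def by (simp add: field_simps)
      have "(\<Sum>i\<le>Suc L. scl (c i * of_nat i) (v i)) =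
          (\<Sum>i\<le>Suc L. scl (al * x1 i) (v i) + scl (be * x2 i) (v i) + scl (ga * x3 i) (v i))"
        by (rule sum.cong) (simp_all add: coef scale_left_distrib)
      also have "\<dots> =
          scl al (\<Sum>i\<le>Suc L. scl (x1 i) (v i)) + scl be (\<Sum>i\<le>Suc L. scl (x2 i) (v i))
          + scl ga (\<Sum>i\<le>Suc L. scl (x3 i) (v i))"
        by (simp only: sum.distrib scale_sum_right scale_scale)
      also have "\<dots> = 0" using e1 e2 e3 by simp
      finally show "(\<Sum>i\<le>Suc L. scl (c i * of_nat i) (d (s + int i + 4) w)) = 0"
        by (simp add: v_def)
    qed
    define c' where "c' i = c (Suc i) * of_nat (Suc i)" for i
    have R': "\<forall>w\<in>W. (\<Sum>i\<le>L. scl (c' i) (d (s + 5 + int i) w)) = 0"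
    proof
      fix w assume w: "w \<in> W"
      have "0 = (\<Sum>i\<le>Suc L. scl (c i * of_nat i) (d (s + int i + 4) w))" using new w by simp
      also have "\<dots> = (\<Sum>i\<le>L. scl (c' i) (d (s + 5 + int i) w))"
        by (subst sum.atMost_Suc_shift) (simp add: c'_def add_ac)
      finally show "(\<Sum>i\<le>L. scl (c' i) (d (s + 5 + int i) w)) = 0" by simp
    qed
    have nz: "(of_nat (Suc L) :: complex) \<noteq> 0" by (rule of_nat_neq_0)
    have "c' L \<noteq> 0" unfolding c'_def mult_eq_0_iff de_Morgan_disj using cL nz by blast
    moreover have "s + 5 \<ge> 1" using s by simp
    ultimately show "\<exists>N\<ge>1. \<forall>w\<in>W. d N w = 0" using Suc R' by blast
  qed
qed


lemma op_rel: "\<exists>m a. a m \<noteq> 0 \<and> (\<forall>w\<in>W. (\<Sum>i\<le>m. scl (a i) (d (1 + int i) w)) = 0)"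
proof -
  define sF :: "complex \<Rightarrow> ('a \<Rightarrow> 'a) \<Rightarrow> ('a \<Rightarrow> 'a)" where "sF c f = (\<lambda>x. scl c (f x))" for c f
  interpret F: vector_space sF
    by unfold_locales (auto simp: sF_def fun_eq_iff scale_right_distrib scale_left_distrib)
  define R where "R T = (\<lambda>x. if x \<in> BW then T x else 0)" for T :: "'a \<Rightarrow> 'a"
  define del where "del (b::'a) y = (\<lambda>x. if x = b then y else (0::'a))" for b y
  define G where "G = (\<lambda>(b, b'). del b b') ` (BW \<times> BW)"
  have fG: "finite G" using W(2) by (simp add: G_def)
  have dspan: "del b y \<in> F.span G" if b: "b \<in> BW" and y: "y \<in> span BW" for b y
  proof -
    obtain u where u: "y = (\<Sum>b'\<in>BW. scl (u b') b')" using y span_finite[OF W(2)] by auto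
    have "del b y = (\<Sum>b'\<in>BW. sF (u b') (del b b'))"
      by (auto simp: fun_eq_iff u del_def sF_def sum_fun_apply)
    also have "\<dots> \<in> F.span G"
      by (intro F.span_sum F.span_scale F.span_base) (auto simp: G_def b)
    finally show ?thesis .
  qed
  have Rspan: "R (d (1 + int i)) \<in> F.span G" for i
  proof -
    have "R (d (1 + int i)) = (\<Sum>b\<in>BW. del b (d (1 + int i) b))"
      using W(2) by (auto simp: fun_eq_iff R_def del_def sum_fun_apply)
    also have "\<dots> \<in> F.span G"
    proof (intro F.span_sum dspan)
      fix b assume "b \<in> BW"
      then have "b \<in> W" using W(1) span_base by auto
      then show "d (1 + int i) b \<in> span BW" using inv_d[of "1 + int i" b] W(1) by simp
    qed
    finally show ?thesis .
  qed
  obtain m a where a: "a m \<noteq> 0" "(\<Sum>i\<le>m. sF (a i) (R (d (1 + int i)))) = 0"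
    using F.rel_exists[OF fG, of "\<lambda>i. R (d (1 + int i))"] Rspan by blast
  have onB: "(\<Sum>i\<le>m. scl (a i) (d (1 + int i) b)) = 0" if "b \<in> BW" for b
  proof -
    have "(\<Sum>i\<le>m. sF (a i) (R (d (1 + int i)))) b = 0" using a(2) by simp
    then show ?thesis using that by (simp add: sum_fun_apply sF_def R_def)
  qed
  have "\<forall>w\<in>W. (\<Sum>i\<le>m. scl (a i) (d (1 + int i) w)) = 0"
  proof
    fix w assume "w \<in> W"
    then have w: "w \<in> span BW" using W(1) by simp
    have L: "lin (\<lambda>w. \<Sum>i\<le>m. scl (a i) (d (1 + int i) w))"
      by (rule lin_sum_fam) (simp add: lin_d)
    show "(\<Sum>i\<le>m. scl (a i) (d (1 + int i) w)) = 0"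
      using lin_zero_on_span[OF L _ w] onB by blast
  qed
  with a(1) show ?thesis by blast
qed



lemma vanish: "\<exists>P\<ge>3. (\<forall>n\<ge>P. \<forall>w\<in>W. d n w = 0) \<and> (\<forall>k\<ge>P. \<forall>w\<in>W. h k w = 0)"
proof -
  obtain m a where a: "a m \<noteq> 0" "\<forall>w\<in>W. (\<Sum>i\<le>m. scl (a i) (d (1 + int i) w)) = 0"
    using op_rel by blast
  have "\<exists>N\<ge>1. \<forall>w\<in>W. d N w = 0"
    by (rule Z1[of m, rule_format, of 1 a]) (use a in auto)
  then obtain N where N: "N \<ge> 1" "\<forall>w\<in>W. d N w = 0" by blast
  have D: "d n w = 0" if n: "n \<ge> 2 * N + 1" and w: "w \<in> W" for n w
  proof -
    define m where "m = n - N"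
    have m1: "m \<ge> 1" using n N by (simp add: m_def)
    have e: "d m (d N w) - d N (d m w) = scl (of_int (m - N)) (d (m + N) w)" using dd[OF m1 N(1)] .
    have z1: "d m (d N w) = 0" using N w lin_0[OF lin_d] by simp
    have z2: "d N (d m w) = 0" using N inv_d[OF m1 w] by simp
    have mn: "m + N = n" by (simp add: m_def)
    have "m - N \<noteq> 0" using n N unfolding m_def by linarith
    then have nz: "(of_int (m - N) :: complex) \<noteq> 0" by (simp only: of_int_eq_0_iff not_False_eq_True)
    from e have "scl (of_int (m - N)) (d n w) = 0" unfolding z1 z2 mn by simp
    with nz show ?thesis by simp
  qed
  have H: "h k w = 0" if k: "k \<ge> 2 * N + 1" and w: "w \<in> W" for k w
  proof -
    define j where "j = k - N"
    have j0: "j \<ge> 0" using k N by (simp add: j_def)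
    have e: "d N (h j w) - h j (d N w) = scl (- (of_int j + 1/2)) (h (N + j) w)" using dh .
    have z1: "d N (h j w) = 0" using N inv_h[OF j0 w] by simp
    have z2: "h j (d N w) = 0" using N w lin_0[OF lin_h] by simp
    have jk: "N + j = k" by (simp add: j_def)
    from e have "scl (- (of_int j + 1/2)) (h k w) = 0" unfolding z1 z2 jk by simp
    with half_ne[of j] show ?thesis by (metis scale_eq_0_iff neg_equal_0_iff_equal)
  qed
  have "2 * N + 1 \<ge> 3" using N by simp
  with D H show ?thesis by (intro exI[of _ "2 * N + 1"]) auto
qed

end

context cvs
begin
lemma stable_eig:
  assumes "lin S" "\<forall>x\<in>U. S x \<in> U" "\<forall>x\<in>U. T (S x) = S (T x)"
  shows "\<forall>x\<in>{x\<in>U. T x = scl e x}. S x \<in> {x\<in>U. T x = scl e x}"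
  using assms by (auto simp: lin_scl)
end

context Dfin
begin

definition V where
  "V t = {w\<in>W. (\<forall>n. n \<ge> 3 \<and> 2*n \<ge> t \<longrightarrow> d n w = 0) \<and> (\<forall>k. k \<ge> 1 \<and> 2*k+1 \<ge> t \<longrightarrow> h k w = 0)}"

lemma W_sub: "subspace W" using W(1) by simp

lemma V_sub: "subspace (V t)"
  using W_sub unfolding V_def subspace_def
  by (auto simp: lin_add[OF lin_d] lin_add[OF lin_h] lin_scl[OF lin_d] lin_scl[OF lin_h]
      lin_0[OF lin_d] lin_0[OF lin_h])

lemma V_W: "V t \<subseteq> W" by (auto simp: V_def)

lemma V_d:
  assumes m: "m \<ge> 1" and w: "w \<in> V t"
  shows "d m w \<in> V t"
proof -
  have wW: "w \<in> W" using w by (simp add: V_def)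
  have A: "d n (d m w) = 0" if n: "n \<ge> 3" "2*n \<ge> t" for n
  proof -
    have e: "d n (d m w) - d m (d n w) = scl (of_int (n - m)) (d (n + m) w)" using dd n m by simp
    have "d n w = 0" using w n by (simp add: V_def)
    moreover have "d (n + m) w = 0" using w n m by (simp add: V_def)
    ultimately show ?thesis using e lin_0[OF lin_d] by simp
  qed
  have B: "h k (d m w) = 0" if k: "k \<ge> 1" "2*k+1 \<ge> t" for k
  proof -
    have e: "d m (h k w) - h k (d m w) = scl (- (of_int k + 1/2)) (h (m + k) w)" using dh .
    have "h k w = 0" using w k by (simp add: V_def)
    moreover have "h (m + k) w = 0" using w k m by (simp add: V_def)
    ultimately show ?thesis using e lin_0[OF lin_d] by simp
  qed
  show ?thesis using A B inv_d[OF m wW] by (simp add: V_def)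
qed

lemma V_h:
  assumes l: "l \<ge> 0" and w: "w \<in> V t"
  shows "h l w \<in> V t"
proof -
  have wW: "w \<in> W" using w by (simp add: V_def)
  have A: "d n (h l w) = 0" if n: "n \<ge> 3" "2*n \<ge> t" for n
  proof -
    have e: "d n (h l w) - h l (d n w) = scl (- (of_int l + 1/2)) (h (n + l) w)" using dh .
    have "d n w = 0" using w n by (simp add: V_def)
    moreover have "h (n + l) w = 0" using w n l by (simp add: V_def)
    ultimately show ?thesis using e lin_0[OF lin_h] by simp
  qed
  have B: "h k (h l w) = 0" if k: "k \<ge> 1" "2*k+1 \<ge> t" for k
  proof -
    have "h k w = 0" using w k by (simp add: V_def)
    then show ?thesis using hh[of k l w] k l lin_0[OF lin_h] by simp
  qed
  show ?thesis using A B inv_h[OF l wW] by (simp add: V_def)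
qed

lemma V_step:
  assumes t: "t \<ge> 3" and u: "u \<in> V (t + 1)" "u \<noteq> 0"
  shows "\<exists>w\<in>V t. w \<noteq> 0"
proof -
  have Usub: "subspace (V (t + 1))" by (rule V_sub)
  have UB: "V (t + 1) \<subseteq> span BW" using V_W W(1) by blast
  have "t = 4 \<or> (\<exists>n. t = 2 * n \<and> n \<ge> 3) \<or> (\<exists>k. t = 2 * k + 1 \<and> k \<ge> 1)"
    using t by presburger
  then consider "t = 4" | n where "t = 2 * n" "n \<ge> 3" | k where "t = 2 * k + 1" "k \<ge> 1"
    by blast
  then show ?thesis
  proof cases
    case 1
    have "u \<in> V t" using u(1) 1 by (auto simp: V_def)
    then show ?thesis using u(2) by blast
  next
    case 2
    define c :: complex where "c = 1 / of_int (2 - n)"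
    have c: "c * of_int (2 - n) = 1" using 2 by (simp add: c_def)
    define Bo where "Bo x = scl c (d (n - 1) x)" for x
    have linBo: "lin Bo" unfolding Bo_def by (rule lin_scl_comp[OF lin_d])
    have comm1: "\<forall>x\<in>V (t + 1). d n x = d 1 (Bo x) - Bo (d 1 x)"
    proof
      fix x assume x: "x \<in> V (t + 1)"
      have "d 1 (d (n - 1) x) - d (n - 1) (d 1 x) = scl (of_int (1 - (n - 1))) (d (1 + (n - 1)) x)"
        using dd[of 1 "n - 1"] 2 by simp
      then have "d 1 (Bo x) - Bo (d 1 x) = scl (c * of_int (2 - n)) (d n x)"
        unfolding Bo_def by (simp add: lin_scl[OF lin_d] flip: scale_right_diff_distrib)
      then show "d n x = d 1 (Bo x) - Bo (d 1 x)" using c by simp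
    qed
    have comm2: "\<forall>x\<in>V (t + 1). d n (d 1 x) = d 1 (d n x)"
    proof
      fix x assume x: "x \<in> V (t + 1)"
      have e: "d n (d 1 x) - d 1 (d n x) = scl (of_int (n - 1)) (d (n + 1) x)" using dd[of n 1] 2 by simp
      have "d (n + 1) x = 0" using x 2 by (simp add: V_def)
      then show "d n (d 1 x) = d 1 (d n x)" using e by simp
    qed
    have comm3: "\<forall>x\<in>V (t + 1). d n (Bo x) = Bo (d n x)"
    proof
      fix x assume x: "x \<in> V (t + 1)"
      have e: "d n (d (n - 1) x) - d (n - 1) (d n x) = scl (of_int (n - (n - 1))) (d (n + (n - 1)) x)"
        using dd[of n "n - 1"] 2 by simp
      have "d (n + (n - 1)) x = 0" using x 2 by (simp add: V_def)
      then have "d n (d (n - 1) x) = d (n - 1) (d n x)" using e by simp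
      then show "d n (Bo x) = Bo (d n x)" unfolding Bo_def by (simp add: lin_scl[OF lin_d])
    qed
    have pres1: "\<forall>x\<in>V (t + 1). d 1 x \<in> V (t + 1)" using V_d by simp
    have pres2: "\<forall>x\<in>V (t + 1). Bo x \<in> V (t + 1)"
      unfolding Bo_def using V_d 2 subspace_scale[OF Usub] by simp
    have pres3: "\<forall>x\<in>V (t + 1). d n x \<in> V (t + 1)" using V_d 2 by simp
    obtain w where w: "w \<in> V (t + 1)" "w \<noteq> 0" "d n w = 0"
      using central_comm[OF Usub UB W(2) u lin_d linBo lin_d pres1 pres2 pres3 comm1 comm2 comm3]
      by blast
    have "w \<in> V t"
    proof -
      have "d n' w = 0" if "n' \<ge> 3" "2 * n' \<ge> t" for n'
      proof (cases "n' = n")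
        case True then show ?thesis using w by simp
      next
        case False then show ?thesis using w that 2 by (simp add: V_def)
      qed
      moreover have "h k w = 0" if "k \<ge> 1" "2 * k + 1 \<ge> t" for k
        using w that 2 by (simp add: V_def)
      ultimately show ?thesis using w by (simp add: V_def)
    qed
    then show ?thesis using w by blast
  next
    case 3
    define c :: complex where "c = - 1 / (of_int (k - 1) + 1/2)"
    have inv: "(y::complex) \<noteq> 0 \<Longrightarrow> (- 1 / y) * (- y) = 1" for y by simp
    have c: "c * (- (of_int (k - 1) + 1/2)) = 1" unfolding c_def by (rule inv[OF half_ne])
    define Bo where "Bo x = scl c (h (k - 1) x)" for x
    have linBo: "lin Bo" unfolding Bo_def by (rule lin_scl_comp[OF lin_h])
    have comm1: "\<forall>x\<in>V (t + 1). h k x = d 1 (Bo x) - Bo (d 1 x)"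
    proof
      fix x assume x: "x \<in> V (t + 1)"
      have "d 1 (h (k - 1) x) - h (k - 1) (d 1 x) = scl (- (of_int (k - 1) + 1/2)) (h (1 + (k - 1)) x)"
        by (rule dh)
      then have "d 1 (Bo x) - Bo (d 1 x) = scl (c * (- (of_int (k - 1) + 1/2))) (h k x)"
        unfolding Bo_def by (simp add: lin_scl[OF lin_d] flip: scale_right_diff_distrib)
      then show "h k x = d 1 (Bo x) - Bo (d 1 x)" using c by simp
    qed
    have comm2: "\<forall>x\<in>V (t + 1). h k (d 1 x) = d 1 (h k x)"
    proof
      fix x assume x: "x \<in> V (t + 1)"
      have e: "d 1 (h k x) - h k (d 1 x) = scl (- (of_int k + 1/2)) (h (1 + k) x)" by (rule dh)
      have "h (1 + k) x = 0" using x 3 by (simp add: V_def)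
      then show "h k (d 1 x) = d 1 (h k x)" using e by simp
    qed
    have comm3: "\<forall>x\<in>V (t + 1). h k (Bo x) = Bo (h k x)"
      unfolding Bo_def using hh[of k "k - 1"] 3 by (simp add: lin_scl[OF lin_h])
    have pres1: "\<forall>x\<in>V (t + 1). d 1 x \<in> V (t + 1)" using V_d by simp
    have pres2: "\<forall>x\<in>V (t + 1). Bo x \<in> V (t + 1)"
      unfolding Bo_def using V_h 3 subspace_scale[OF Usub] by simp
    have pres3: "\<forall>x\<in>V (t + 1). h k x \<in> V (t + 1)" using V_h 3 by simp
    obtain w where w: "w \<in> V (t + 1)" "w \<noteq> 0" "h k w = 0"
      using central_comm[OF Usub UB W(2) u lin_d linBo lin_h pres1 pres2 pres3 comm1 comm2 comm3]
      by blast
    have "w \<in> V t"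
    proof -
      have "h k' w = 0" if "k' \<ge> 1" "2 * k' + 1 \<ge> t" for k'
      proof (cases "k' = k")
        case True then show ?thesis using w by simp
      next
        case False then show ?thesis using w that 3 by (simp add: V_def)
      qed
      moreover have "d n w = 0" if "n \<ge> 3" "2 * n \<ge> t" for n
      proof -
        have "2 + 2 * k \<le> 2 * n" using that 3 by presburger
        then show ?thesis using w that 3 by (simp add: V_def)
      qed
      ultimately show ?thesis using w by (simp add: V_def)
    qed
    then show ?thesis using w by blast
  qed
qed

end

context Dfin
begin

lemma V3_nonzero:
  assumes w0: "w0 \<in> W" "w0 \<noteq> 0"
  shows "\<exists>u\<in>V 3. u \<noteq> 0"
proof -
  obtain P where P: "P \<ge> 3" "\<forall>n\<ge>P. \<forall>w\<in>W. d n w = 0" "\<forall>k\<ge>P. \<forall>w\<in>W. h k w = 0"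
    using vanish by blast
  have top: "w0 \<in> V (2 * P)"
  proof -
    have "d n w0 = 0" if "n \<ge> 3" "2 * n \<ge> 2 * P" for n
      using P(2) w0 that by simp
    moreover have "h k w0 = 0" if "k \<ge> 1" "2 * k + 1 \<ge> 2 * P" for k
    proof -
      have "k \<ge> P" using that by presburger
      then show ?thesis using P(3) w0 by simp
    qed
    ultimately show ?thesis using w0 by (simp add: V_def)
  qed
  have step: "2 * P - int j \<ge> 3 \<longrightarrow> (\<exists>u\<in>V (2 * P - int j). u \<noteq> 0)" for j :: nat
  proof (induct j)
    case 0
    have z: "2 * P - int 0 = 2 * P" by simp
    show ?case unfolding z using top w0(2) by blast
  next
    case (Suc j)
    show ?case
    proof
      assume a: "2 * P - int (Suc j) \<ge> 3"
      have "2 * P - int j \<ge> 3" using a by simp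
      then obtain u where u: "u \<in> V (2 * P - int j)" "u \<noteq> 0" using Suc.hyps by blast
      have eq: "(2 * P - int (Suc j)) + 1 = 2 * P - int j" by simp
      have "u \<in> V ((2 * P - int (Suc j)) + 1)" unfolding eq by (rule u(1))
      from V_step[OF a this u(2)] show "\<exists>u\<in>V (2 * P - int (Suc j)). u \<noteq> 0" .
    qed
  qed
  have e: "2 * P - int (nat (2 * P - 3)) = 3" using P(1) by simp
  have "3 \<le> 2 * P - int (nat (2 * P - 3))" unfolding e by simp
  from mp[OF step[of "nat (2 * P - 3)"] this] show ?thesis unfolding e .
qed

lemma common_eig:
  assumes w0: "w0 \<in> W" "w0 \<noteq> 0"
  shows "\<exists>w\<in>W. w \<noteq> 0 \<and> (\<forall>n\<ge>1. \<exists>c. d n w = scl c w) \<and> (\<forall>k\<ge>0. \<exists>c. h k w = scl c w)"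
proof -
  obtain u where u: "u \<in> V 3" "u \<noteq> 0" using V3_nonzero[OF w0] by blast
  have Ks: "subspace (V 3)" by (rule V_sub)
  have KB: "V 3 \<subseteq> span BW" using V_W W(1) by blast
  have c12: "\<forall>x\<in>V 3. d 1 (d 2 x) = d 2 (d 1 x)"
  proof
    fix x assume x: "x \<in> V 3"
    have e: "d 1 (d 2 x) - d 2 (d 1 x) = scl (of_int (1 - 2)) (d (1 + 2) x)" using dd[of 1 2] by simp
    have "d 3 x = 0" using x by (simp add: V_def)
    then show "d 1 (d 2 x) = d 2 (d 1 x)" using e by simp
  qed
  have c1h: "\<forall>x\<in>V 3. d 1 (h 0 x) = h 0 (d 1 x)"
  proof
    fix x assume x: "x \<in> V 3"
    have e: "d 1 (h 0 x) - h 0 (d 1 x) = scl (- (of_int 0 + 1/2)) (h (1 + 0) x)" by (rule dh)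
    have "h 1 x = 0" using x by (simp add: V_def)
    then show "d 1 (h 0 x) = h 0 (d 1 x)" using e by simp
  qed
  have c2h: "\<forall>x\<in>V 3. d 2 (h 0 x) = h 0 (d 2 x)"
  proof
    fix x assume x: "x \<in> V 3"
    have e: "d 2 (h 0 x) - h 0 (d 2 x) = scl (- (of_int 0 + 1/2)) (h (2 + 0) x)" by (rule dh)
    have "h 2 x = 0" using x by (simp add: V_def)
    then show "d 2 (h 0 x) = h 0 (d 2 x)" using e by simp
  qed
  have p1: "\<forall>x\<in>V 3. d 1 x \<in> V 3" using V_d by simp
  have p2: "\<forall>x\<in>V 3. d 2 x \<in> V 3" using V_d by simp
  have p0: "\<forall>x\<in>V 3. h 0 x \<in> V 3" using V_h by simp
  obtain w1 e1 where w1: "w1 \<in> V 3" "w1 \<noteq> 0" "d 1 w1 = scl e1 w1"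
    using eigen[OF Ks KB W(2) u lin_d p1] by blast
  define E1 where "E1 = {x\<in>V 3. d 1 x = scl e1 x}"
  have E1s: "subspace E1" unfolding E1_def by (rule eig_subspace[OF Ks lin_d])
  have E1B: "E1 \<subseteq> span BW" using KB by (auto simp: E1_def)
  have w1E: "w1 \<in> E1" using w1 by (simp add: E1_def)
  have E1d2: "\<forall>x\<in>E1. d 2 x \<in> E1" unfolding E1_def by (rule stable_eig[OF lin_d p2 c12])
  have E1h0: "\<forall>x\<in>E1. h 0 x \<in> E1" unfolding E1_def by (rule stable_eig[OF lin_h p0 c1h])
  obtain w2 e2 where w2: "w2 \<in> E1" "w2 \<noteq> 0" "d 2 w2 = scl e2 w2"
    using eigen[OF E1s E1B W(2) w1E w1(2) lin_d E1d2] by blast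
  define E2 where "E2 = {x\<in>E1. d 2 x = scl e2 x}"
  have E2s: "subspace E2" unfolding E2_def by (rule eig_subspace[OF E1s lin_d])
  have E2B: "E2 \<subseteq> span BW" using E1B by (auto simp: E2_def)
  have w2E: "w2 \<in> E2" using w2 by (simp add: E2_def)
  have c2h': "\<forall>x\<in>E1. d 2 (h 0 x) = h 0 (d 2 x)" using c2h by (auto simp: E1_def)
  have E2h0: "\<forall>x\<in>E2. h 0 x \<in> E2" unfolding E2_def by (rule stable_eig[OF lin_h E1h0 c2h'])
  obtain w e3 where w: "w \<in> E2" "w \<noteq> 0" "h 0 w = scl e3 w"
    using eigen[OF E2s E2B W(2) w2E w2(2) lin_h E2h0] by blast
  have wK: "w \<in> V 3" and we1: "d 1 w = scl e1 w" and we2: "d 2 w = scl e2 w"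
    using w by (auto simp: E1_def E2_def)
  have Vd: "\<forall>n. n \<ge> 3 \<and> 2 * n \<ge> 3 \<longrightarrow> d n w = 0"
    and Vh: "\<forall>k. k \<ge> 1 \<and> 2 * k + 1 \<ge> 3 \<longrightarrow> h k w = 0"
    using wK unfolding V_def by blast+
  have "\<exists>c. d n w = scl c w" if "n \<ge> 1" for n
  proof -
    have "n = 1 \<or> n = 2 \<or> n \<ge> 3" using that by linarith
    then consider "n = 1" | "n = 2" | "n \<ge> 3" by blast
    then show ?thesis
    proof cases
      case 1 then show ?thesis using we1 by blast
    next
      case 2 then show ?thesis using we2 by blast
    next
      case 3
      then have "2 * n \<ge> 3" by linarith
      with 3 Vd have "d n w = 0" by blast
      then have "d n w = scl 0 w" by simp
      then show ?thesis by blast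
    qed
  qed
  moreover have "\<exists>c. h k w = scl c w" if "k \<ge> 0" for k
  proof (cases "k = 0")
    case True then show ?thesis using w(3) by blast
  next
    case False
    then have "k \<ge> 1" "2 * k + 1 \<ge> 3" using that by linarith+
    with Vh have "h k w = 0" by blast
    then have "h k w = scl 0 w" by simp
    then show ?thesis by blast
  qed
  moreover have "w \<in> W" using wK V_W by blast
  ultimately show ?thesis using w(2) by blast
qed

end

theorem theorem6p3:
  fixes scl :: "complex \<Rightarrow> 'v::ab_group_add \<Rightarrow> 'v"
    and d h :: "int \<Rightarrow> 'v \<Rightarrow> 'v" and c1 c2 :: "'v \<Rightarrow> 'v"
  assumes "D_module scl d h c1 c2"
    and "\<exists>x::'v. x \<noteq> 0"
    and "Dplus_locally_finite scl d h"
  shows "(\<exists>v. v \<noteq> 0 \<and> (\<forall>n\<ge>1. d n v \<in> module.span scl {v}) \<and>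
                      (\<forall>k\<ge>0. h k v \<in> module.span scl {v})) \<and>
         (D_simple scl d h c1 c2 \<longrightarrow>
           Whittaker_module scl d h c1 c2 \<or> highest_weight_module scl d h c1 c2)"
proof -
  note DM = assms(1)[unfolded D_module_def]
  have vs: "vector_space scl" using DM by blast
  interpret vector_space scl by (rule vs)
  interpret cvs scl by unfold_locales
  have linf: "lin f" if "Vector_Spaces.linear scl scl f" for f
    using that by (simp add: lin_def Vector_Spaces.linear_def module_hom_def module_hom_axioms_def)
  interpret Dm scl d h
  proof unfold_locales
    show "lin (d m)" for m using DM linf by blast
    show "lin (h k)" for k using DM linf by blast
    show "d m (d n x) - d n (d m x) = scl (of_int (m - n)) (d (m + n) x)" if "m \<ge> 1" "n \<ge> 1" for m n x
      using DM that by auto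
    show "d m (h k x) - h k (d m x) = scl (- (of_int k + 1/2)) (h (m + k) x)" for m k x
      using DM by blast
    show "h k (h l x) = h l (h k x)" if "k \<ge> 0" "l \<ge> 0" for k l x
    proof -
      have "h k (h l x) - h l (h k x) = 0" using DM that by auto
      then show ?thesis by simp
    qed
  qed
  obtain x :: 'v where x: "x \<noteq> 0" using assms(2) by blast
  obtain W B where WB: "subspace W" "x \<in> W" "finite B" "W = span B"
    "\<forall>n\<ge>1. \<forall>x\<in>W. d n x \<in> W" "\<forall>k\<ge>0. \<forall>x\<in>W. h k x \<in> W"
    using assms(3) unfolding Dplus_locally_finite_def by blast
  interpret Dfin scl d h W B
    by unfold_locales (use WB in auto)
  obtain v where v: "v \<noteq> 0" "\<forall>n\<ge>1. \<exists>c. d n v = scl c v" "\<forall>k\<ge>0. \<exists>c. h k v = scl c v"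
    using common_eig[OF WB(2) x] by blast
  have part1: "v \<noteq> 0 \<and> (\<forall>n\<ge>1. d n v \<in> span {v}) \<and> (\<forall>k\<ge>0. h k v \<in> span {v})"
    using v by (auto simp: span_singleton)
  have part2: "Whittaker_module scl d h c1 c2" if simple: "D_simple scl d h c1 c2"
  proof -
    have gen: "D_generated_by scl d h c1 c2 v"
      unfolding D_generated_by_def using simple v(1) unfolding D_simple_def by blast
    define phid where "phid n = (SOME c. d n v = scl c v)" for n
    define phih where "phih k = (SOME c. h k v = scl c v)" for k
    have pd: "d n v = scl (phid n) v" if "n \<ge> 1" for n
      using v(2) that unfolding phid_def by (metis (mono_tags, lifting) someI_ex)
    have ph: "h k v = scl (phih k) v" if "k \<ge> 0" for k
      using v(3) that unfolding phih_def by (metis (mono_tags, lifting) someI_ex)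
    have hom: "Dplus_lie_hom phid phih"
      unfolding Dplus_lie_hom_def
    proof (intro conjI allI impI)
      fix m n :: int assume m: "m \<ge> 1" and n: "n \<ge> 1"
      have "d m (d n v) - d n (d m v) = scl (of_int (m - n)) (d (m + n) v)" using dd[OF m n] .
      moreover have "d m (d n v) - d n (d m v) = 0"
        using pd[OF m] pd[OF n] lin_scl[OF lin_d] by (simp add: mult.commute)
      moreover have "d (m + n) v = scl (phid (m + n)) v" using pd m n by simp
      ultimately have "scl (of_int (m - n) * phid (m + n)) v = 0" by simp
      then show "of_int (m - n) * phid (m + n) = 0" using v(1) by simp
    next
      fix m k :: int assume m: "m \<ge> 1" and k: "k \<ge> 0"
      have "d m (h k v) - h k (d m v) = scl (- (of_int k + 1/2)) (h (m + k) v)" using dh .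
      moreover have "d m (h k v) - h k (d m v) = 0"
        using pd[OF m] ph[OF k] lin_scl[OF lin_d] lin_scl[OF lin_h] by (simp add: mult.commute)
      moreover have "h (m + k) v = scl (phih (m + k)) v" using ph m k by simp
      ultimately have "scl (- (of_int k + 1/2) * phih (m + k)) v = 0" by simp
      then show "- (of_int k + 1/2) * phih (m + k) = 0" using v(1) by simp
    qed
    show ?thesis unfolding Whittaker_module_def
      using v(1) gen hom pd ph by blast
  qed
  show ?thesis using part1 part2 by blast
qed

end
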